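(* Let $F$ be the elementary cellular automaton with rule number 152. For every nonempty finite word $u\in\{0,1\}^*$, the deterministic communication complexity of $\textsc{SInv}_{F,u}$ restricted to inputs of length $n$ is bounded by a constant independent of $n$.
   Context: An elementary cellular automaton (ECA) with rule number $N\in\{0,\dots,255\}$ is the map $F:\{0,1\}^{\mathbb Z}\to\{0,1\}^{\mathbb Z}$ given by $F(x)_i=f(x_{i-1},x_i,x_{i+1})$. Here the local rule $f:\{0,1\}^3\to\{0,1\}$ is determined by $N=\sum_{a,b,c\in\{0,1\}}2^{4a+2b+c}f(a,b,c)$. For a nonempty finite word $u$, $p_u\in\{0,1\}^{\mathbb Z}$ is defined by $(p_u)_i=u_{i\bmod |u|}$. For a finite word $x$, $p_u[x]$ is the configuration equal to $x$ on positions $0,\dots,|x|-1$ and to $p_u$ elsewhere. $\textsc{SInv}_{F,u}$ is the decision problem: on input a finite word $x$, decide whether there is an integer $w$ such that for all $t\ge0$ the set of positions where $F^t(p_u)$ and $F^t(p_u[x])$ differ is contained in an interval of length $w$. For each $n$, it is regarded as a function $\{0,1\}^n\to\{0,1\}$. For a function $g:X\times Y\to Z$, $D(g)$ is the minimal depth of a deterministic two-party protocol computing $g$. In such a protocol, Alice knows $x$ and Bob knows $y$. The protocol is a binary tree: each internal node is labelled by a function of Alice's input only or of Bob's input only, with values in $\{\text{left},\text{right}\}$, and each leaf is labelled by an output value. For $g:\{0,1\}^m\to Z$, set $D(g)=\max_{0\le i<m}D(g_i)$, where $g_i:\{0,1\}^i\times\{0,1\}^{m-i}\to Z$ is $g_i(x,y)=g(xy)$.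 *)

theory Defs
  imports Main
begin

type_synonym config = "int \<Rightarrow> bool"

definition local_rule :: "nat \<Rightarrow> bool \<Rightarrow> bool \<Rightarrow> bool \<Rightarrow> bool" where
  "local_rule N a b c = bit N (4 * of_bool a + 2 * of_bool b + of_bool c)"

definition eca :: "nat \<Rightarrow> config \<Rightarrow> config" where
  "eca N x = (\<lambda>i. local_rule N (x (i - 1)) (x i) (x (i + 1)))"

definition per :: "bool list \<Rightarrow> config" where
  "per u = (\<lambda>i. u ! nat (i mod int (length u)))"

definition per_patch :: "bool list \<Rightarrow> bool list \<Rightarrow> config" where
  "per_patch u x = (\<lambda>i. if 0 \<le> i \<and> i < int (length x) then x ! nat i else per u i)"

definition SInv :: "nat \<Rightarrow> bool list \<Rightarrow> bool list \<Rightarrow> bool" where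
  "SInv N u x = (\<exists>w::int. \<forall>t::nat. \<exists>a::int.
      {i. (eca N ^^ t) (per u) i \<noteq> (eca N ^^ t) (per_patch u x) i} \<subseteq> {a..a + w})"

datatype ('a, 'b, 'z) protocol =
    Leaf 'z
  | AliceNode "'a \<Rightarrow> bool" "('a, 'b, 'z) protocol" "('a, 'b, 'z) protocol"
  | BobNode "'b \<Rightarrow> bool" "('a, 'b, 'z) protocol" "('a, 'b, 'z) protocol"

fun run :: "('a, 'b, 'z) protocol \<Rightarrow> 'a \<Rightarrow> 'b \<Rightarrow> 'z" where
  "run (Leaf z) x y = z"
| "run (AliceNode f l r) x y = (if f x then run r x y else run l x y)"
| "run (BobNode f l r) x y = (if f y then run r x y else run l x y)"

fun depth :: "('a, 'b, 'z) protocol \<Rightarrow> nat" where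
  "depth (Leaf z) = 0"
| "depth (AliceNode f l r) = Suc (max (depth l) (depth r))"
| "depth (BobNode f l r) = Suc (max (depth l) (depth r))"

definition comm_cc :: "'a set \<Rightarrow> 'b set \<Rightarrow> ('a \<Rightarrow> 'b \<Rightarrow> 'z) \<Rightarrow> nat" where
  "comm_cc X Y g = (LEAST d. \<exists>P :: ('a, 'b, 'z) protocol.
       depth P = d \<and> (\<forall>x\<in>X. \<forall>y\<in>Y. run P x y = g x y))"

definition words :: "nat \<Rightarrow> bool list set" where
  "words n = {w. length w = n}"

definition comm_cc_word :: "nat \<Rightarrow> (bool list \<Rightarrow> 'z) \<Rightarrow> nat" where
  "comm_cc_word m g = Max (insert 0
      ((\<lambda>i. comm_cc (words i) (words (m - i)) (\<lambda>x y. g (x @ y))) ` {..<m}))"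

end

theory Submission
  imports Defs
begin

lemma eca152: "eca 152 c i = (c i \<and> c (i+1) \<or> c (i-1) \<and> \<not> c i \<and> \<not> c (i+1))"
  unfolding eca_def local_rule_def
  by (cases "c (i-1)"; cases "c i"; cases "c (i+1)") (simp_all add: bit_iff_odd)

lemma iter_local:
  assumes "\<forall>i. i < 0 \<or> i \<ge> n \<longrightarrow> c i = d i"
  shows "\<forall>i. i < - int t \<or> i \<ge> n + int t \<longrightarrow> (eca N ^^ t) c i = (eca N ^^ t) d i"
proof (induction t)
  case 0
  then show ?case using assms by simp
next
  case (Suc t)
  show ?case
  proof (intro allI impI)
    fix i assume h: "i < - int (Suc t) \<or> i \<ge> n + int (Suc t)"
    have "(eca N ^^ t) c (i-1) = (eca N ^^ t) d (i-1)"
         "(eca N ^^ t) c i = (eca N ^^ t) d i"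
         "(eca N ^^ t) c (i+1) = (eca N ^^ t) d (i+1)"
      using Suc h by auto
    then show "(eca N ^^ Suc t) c i = (eca N ^^ Suc t) d i"
      by (simp add: eca_def)
  qed
qed

definition good :: "config \<Rightarrow> bool" where
  "good c = (\<forall>i. c i \<longrightarrow> \<not> c (i+1) \<and> \<not> c (i+2))"

lemma good_shift: assumes "good c" shows "eca 152 c = (\<lambda>i. c (i-1))"
proof
  fix i
  have a: "c (i-1) \<longrightarrow> \<not> c i \<and> \<not> c (i+1)"
    using assms unfolding good_def by (metis add_diff_cancel_right' diff_add_eq one_add_one add.assoc)
  have b: "c i \<longrightarrow> \<not> c (i+1) \<and> \<not> c (i+2)" using assms unfolding good_def by blast
  show "eca 152 c i = c (i-1)" using a b by (auto simp: eca152)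
qed

lemma good_shift_good: "good c \<Longrightarrow> good (\<lambda>i. c (i - d))"
  unfolding good_def by (metis add_diff_eq diff_add_eq)

lemma good_iter: "good c \<Longrightarrow> (eca 152 ^^ k) c = (\<lambda>i. c (i - int k))"
proof (induction k)
  case 0
  then show ?case by simp
next
  case (Suc k)
  have "(eca 152 ^^ Suc k) c = eca 152 (\<lambda>i. c (i - int k))" using Suc by simp
  also have "\<dots> = (\<lambda>i. c (i - 1 - int k))"
    using good_shift[OF good_shift_good[OF Suc.prems, of "int k"]] by simp
  finally show ?case by (simp add: algebra_simps)
qed

definition norun :: "config \<Rightarrow> nat \<Rightarrow> bool" where
  "norun c m = (\<forall>i. \<exists>j<m. \<not> c (i + int j))"

lemma adj: "eca 152 c i \<Longrightarrow> eca 152 c (i+1) \<Longrightarrow> c i \<and> c (i+1) \<and> c (i+2)"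
  by (auto simp: eca152 algebra_simps)

lemma norun_step: assumes m: "2 \<le> m" and nr: "norun c (Suc m)" shows "norun (eca 152 c) m"
  unfolding norun_def
proof
  fix i show "\<exists>j<m. \<not> eca 152 c (i + int j)"
  proof (rule ccontr)
    assume "\<not> ?thesis" hence all: "\<forall>j<m. eca 152 c (i + int j)" by auto
    have "\<forall>j<Suc m. c (i + int j)"
    proof (intro allI impI)
      fix j assume j: "j < Suc m"
      define j' where "j' = min j (m-2)"
      have a: "eca 152 c (i + int j')" using all j'_def m by auto
      have b: "eca 152 c (i + int j' + 1)" using all[rule_format, of "j'+1"] j'_def m
        by (simp add: algebra_simps)
      from adj[OF a b] have c: "c (i+int j') \<and> c (i + int j' + 1) \<and> c(i + int j' + 2)" .
      have "int j = int j' \<or> int j = int j' + 1 \<or> int j = int j' + 2" using j m j'_def by auto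
      then show "c (i + int j)" using c by (auto simp: algebra_simps)
    qed
    with nr show False unfolding norun_def by blast
  qed
qed

lemma norun_iter: "norun c (m+2) \<Longrightarrow> norun ((eca 152 ^^ m) c) 2"
proof (induction m arbitrary: c)
  case 0
  then show ?case by (simp add: numeral_2_eq_2)
next
  case (Suc m)
  have "norun (eca 152 c) (m+2)" using norun_step[of "m+2" c] Suc.prems by simp
  from Suc.IH[OF this] show ?case by (simp only: funpow_Suc_right o_def)
qed

lemma norun2_good: assumes "norun c 2" shows "good (eca 152 c)"
proof -
  have na: "\<not> (c i \<and> c (i+1))" for i
  proof -
    obtain j where "j < (2::nat)" "\<not> c (i + int j)" using assms unfolding norun_def by blast
    then show ?thesis by (cases j) auto
  qed
  show ?thesis unfolding good_def
  proof (intro allI impI)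
    fix i assume h: "eca 152 c i"
    have "\<not> (c (i+1) \<and> c (i+2))" "\<not> (c (i+2) \<and> c (i+3))"
      using na[of "i+1"] na[of "i+2"] by (simp_all add: algebra_simps)
    moreover have "c (i-1) \<and> \<not> c i \<and> \<not> c (i+1)" using h na[of i] by (auto simp: eca152)
    ultimately show "\<not> eca 152 c (i+1) \<and> \<not> eca 152 c (i+2)"
      by (auto simp: eca152 algebra_simps)
  qed
qed

lemma eventually_good: "norun c (m+2) \<Longrightarrow> good ((eca 152 ^^ Suc m) c)"
  using norun2_good[OF norun_iter] by simp

lemma norun_mono: "norun c a \<Longrightarrow> a \<le> b \<Longrightarrow> norun c b"
  unfolding norun_def by (meson less_le_trans)

lemma per_false:
  assumes "k < length u" "\<not> u ! k"
  shows "\<exists>i. s \<le> i \<and> i < s + int (length u) \<and> \<not> per u i"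
proof -
  let ?L = "int (length u)"
  define i where "i = s + (int k - s) mod ?L"
  have L: "0 < ?L" using assms by auto
  have "s \<le> i" "i < s + ?L" using L unfolding i_def by auto
  moreover have "i mod ?L = int k"
  proof -
    have "i mod ?L = (s + (int k - s)) mod ?L" unfolding i_def by (simp add: mod_add_right_eq)
    also have "\<dots> = int k" using assms by simp
    finally show ?thesis .
  qed
  ultimately show ?thesis using assms unfolding per_def by auto
qed

lemma norun_patch:
  assumes "k < length u" "\<not> u ! k"
  shows "norun (per_patch u x) (length x + 2 * length u + 2)"
  unfolding norun_def
proof
  fix s
  let ?n = "int (length x)" and ?L = "int (length u)"
  show "\<exists>j<length x + 2 * length u + 2. \<not> per_patch u x (s + int j)"
  proof (cases "s + ?L \<le> 0 \<or> s \<ge> ?n")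
    case True
    obtain i where i: "s \<le> i" "i < s + ?L" "\<not> per u i" using per_false[OF assms] by blast
    have "\<not> per_patch u x i" using True i unfolding per_patch_def by auto
    moreover have "s + int (nat (i - s)) = i" using i by simp
    moreover have "nat (i - s) < length x + 2 * length u + 2" using i by auto
    ultimately show ?thesis by metis
  next
    case False
    obtain i where i: "?n \<le> i" "i < ?n + ?L" "\<not> per u i" using per_false[OF assms] by blast
    have "\<not> per_patch u x i" using i unfolding per_patch_def by auto
    moreover have "s + int (nat (i - s)) = i" using i False by simp
    moreover have "nat (i - s) < length x + 2 * length u + 2" using i False by auto
    ultimately show ?thesis by metis
  qed
qed

lemma SInv_true:
  assumes "k < length u" "\<not> u ! k"
  shows "SInv 152 u x"
proof -
  let ?n = "length x" and ?L = "length u"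
  define m where "m = ?n + 2 * ?L"
  define T where "T = Suc m"
  define c where "c = per u"
  define d where "d = per_patch u x"
  have "norun c (m+2)"
  proof -
    have e: "per_patch u [] = per u" unfolding per_patch_def by auto
    have "norun (per u) (0 + 2 * length u + 2)" using norun_patch[OF assms, of "[]"] e by simp
    then show ?thesis unfolding c_def m_def by (rule norun_mono) simp
  qed
  hence gc: "good ((eca 152 ^^ T) c)" unfolding T_def by (rule eventually_good)
  have "norun d (m+2)" using norun_patch[OF assms, of x] unfolding d_def m_def by simp
  hence gd: "good ((eca 152 ^^ T) d)" unfolding T_def by (rule eventually_good)
  have agree: "\<forall>i. i < 0 \<or> i \<ge> int ?n \<longrightarrow> c i = d i" unfolding c_def d_def per_patch_def by auto
  have loc: "\<forall>i. i < - int t \<or> i \<ge> int ?n + int t \<longrightarrow> (eca 152 ^^ t) c i = (eca 152 ^^ t) d i" for t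
    using iter_local[OF agree] by blast
  have "\<forall>t. \<exists>a. {i. (eca 152 ^^ t) c i \<noteq> (eca 152 ^^ t) d i} \<subseteq> {a..a + (int ?n + 2 * int T)}"
  proof
    fix t
    show "\<exists>a. {i. (eca 152 ^^ t) c i \<noteq> (eca 152 ^^ t) d i} \<subseteq> {a..a + (int ?n + 2 * int T)}"
    proof (cases "t \<le> T")
      case True
      have "{i. (eca 152 ^^ t) c i \<noteq> (eca 152 ^^ t) d i} \<subseteq> {- int T.. - int T + (int ?n + 2 * int T)}"
      proof
        fix i assume "i \<in> {i. (eca 152 ^^ t) c i \<noteq> (eca 152 ^^ t) d i}"
        hence "\<not> (i < - int t \<or> i \<ge> int ?n + int t)" using loc[of t] by blast
        then show "i \<in> {- int T.. - int T + (int ?n + 2 * int T)}" using True by auto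
      qed
      then show ?thesis by blast
    next
      case False
      then obtain k where k: "t = k + T" by (metis le_add_diff_inverse2 nat_le_linear)
      have ec: "(eca 152 ^^ t) c = (\<lambda>i. (eca 152 ^^ T) c (i - int k))"
        unfolding k funpow_add o_def using good_iter[OF gc] by simp
      have ed: "(eca 152 ^^ t) d = (\<lambda>i. (eca 152 ^^ T) d (i - int k))"
        unfolding k funpow_add o_def using good_iter[OF gd] by simp
      have "{i. (eca 152 ^^ t) c i \<noteq> (eca 152 ^^ t) d i} \<subseteq> {int k - int T.. int k - int T + (int ?n + 2 * int T)}"
      proof
        fix i assume "i \<in> {i. (eca 152 ^^ t) c i \<noteq> (eca 152 ^^ t) d i}"
        hence "(eca 152 ^^ T) c (i - int k) \<noteq> (eca 152 ^^ T) d (i - int k)" using ec ed by simp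
        hence "\<not> (i - int k < - int T \<or> i - int k \<ge> int ?n + int T)" using loc[of T] by blast
        then show "i \<in> {int k - int T.. int k - int T + (int ?n + 2 * int T)}" by auto
      qed
      then show ?thesis by blast
    qed
  qed
  then show ?thesis unfolding SInv_def c_def d_def by blast
qed

lemma all_true_per: "\<forall>b\<in>set u. b \<Longrightarrow> u \<noteq> [] \<Longrightarrow> per u = (\<lambda>_. True)"
proof
  fix i assume a: "\<forall>b\<in>set u. b" and u: "u \<noteq> []"
  have l: "nat (i mod int (length u)) < length u" using u
    by (simp add: nat_less_iff)
  show "per u i = True" using a nth_mem[OF l] unfolding per_def by blast
qed

lemma eca_true: "(eca 152 ^^ t) (\<lambda>_. True) = (\<lambda>_. True)"
  by (induction t) (auto simp: eca152)

lemma SInv_allones: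
  assumes u: "u \<noteq> []" and a: "\<forall>b\<in>set u. b"
  shows "SInv 152 u x \<longleftrightarrow> (\<forall>b\<in>set x. b)"
proof
  assume x: "\<forall>b\<in>set x. b"
  have "per_patch u x = per u"
  proof
    fix i show "per_patch u x i = per u i"
      using x all_true_per[OF a u] unfolding per_patch_def by auto
  qed
  then show "SInv 152 u x" unfolding SInv_def by auto
next
  assume s: "SInv 152 u x"
  show "\<forall>b\<in>set x. b"
  proof (rule ccontr)
    assume "\<not> (\<forall>b\<in>set x. b)"
    then obtain p where p: "p < length x" "\<not> x ! p" by (metis in_set_conv_nth)
    define d0 where "d0 = per_patch u x"
    have pt: "per u = (\<lambda>_. True)" using all_true_per[OF a u] .
    define S where "S = {i. \<not> d0 i}"
    have Ssub: "S \<subseteq> {0..<int (length x)}" unfolding S_def d0_def per_patch_def pt by auto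
    have fin: "finite S" using Ssub finite_subset by blast
    have ne: "int p \<in> S" unfolding S_def d0_def per_patch_def using p by auto
    define z where "z = Min S"
    define q where "q = Max S"
    have zq: "z \<le> q" unfolding z_def q_def using fin ne by (meson Max_ge Min_le order_trans)
    have c1: "(\<forall>i > q. (eca 152 ^^ t) d0 i) \<and> \<not> (eca 152 ^^ t) d0 q" for t
    proof (induction t)
      case 0
      have "\<forall>i > q. d0 i"
        using Max_ge[OF fin] unfolding q_def S_def by fastforce
      moreover have "q \<in> S" unfolding q_def using fin ne Max_in by blast
      ultimately show ?case unfolding S_def by simp
    next
      case (Suc t)
      define D where "D = (eca 152 ^^ t) d0"
      have h: "\<forall>i > q. D i" "\<not> D q" using Suc unfolding D_def by auto
      have "\<forall>i > q. D i \<and> D (i+1)" using h by auto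
      hence "\<forall>i > q. eca 152 D i" by (auto simp: eca152)
      moreover have "\<not> eca 152 D q" using h by (auto simp: eca152)
      moreover have "(eca 152 ^^ Suc t) d0 = eca 152 D" unfolding D_def by simp
      ultimately show ?case by simp
    qed
    have c2: "(\<forall>i < z - int t. (eca 152 ^^ t) d0 i) \<and> \<not> (eca 152 ^^ t) d0 (z - int t)" for t
    proof (induction t)
      case 0
      have "\<forall>i < z. d0 i"
        using Min_le[OF fin] unfolding z_def S_def by fastforce
      moreover have "z \<in> S" unfolding z_def using fin ne Min_in by blast
      ultimately show ?case unfolding S_def by simp
    next
      case (Suc t)
      let ?d = "(eca 152 ^^ t) d0"
      have h1: "\<forall>i < z - int t. ?d i" and h2: "\<not> ?d (z - int t)" using Suc by auto
      have "\<forall>i < z - int (Suc t). eca 152 ?d i"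
      proof (intro allI impI)
        fix i assume "i < z - int (Suc t)"
        then have "?d i" "?d (i+1)" using h1 by auto
        then show "eca 152 ?d i" by (simp add: eca152)
      qed
      moreover have "\<not> eca 152 ?d (z - int (Suc t))"
      proof -
        have "?d (z - int (Suc t))" using h1 by auto
        moreover have "z - int (Suc t) + 1 = z - int t" by simp
        ultimately show ?thesis using h2 by (simp add: eca152)
      qed
      ultimately show ?case by simp
    qed
    obtain w where w: "\<forall>t::nat. \<exists>a::int.
      {i. (eca 152 ^^ t) (per u) i \<noteq> (eca 152 ^^ t) (per_patch u x) i} \<subseteq> {a..a + w}"
      using s unfolding SInv_def by blast
    define t where "t = Suc (nat w)"
    obtain a where aa: "{i. (eca 152 ^^ t) (per u) i \<noteq> (eca 152 ^^ t) d0 i} \<subseteq> {a..a + w}"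
      using w d0_def by blast
    have "q \<in> {a..a+w}" using aa c1[of t] pt eca_true by auto
    moreover have "z - int t \<in> {a..a+w}" using aa c2[of t] pt eca_true by auto
    ultimately show False using zq unfolding t_def by auto
  qed
qed

lemma cc_le: "\<forall>x\<in>X. \<forall>y\<in>Y. run P x y = g x y \<Longrightarrow> comm_cc X Y g \<le> depth P"
  unfolding comm_cc_def by (rule Least_le) blast

lemma word_le:
  "(\<And>i. i < m \<Longrightarrow> comm_cc (words i) (words (m-i)) (\<lambda>x y. g (x@y)) \<le> C) \<Longrightarrow> comm_cc_word m g \<le> C"
  unfolding comm_cc_word_def by (subst Max_le_iff) auto

theorem mainTheorem18:
  fixes u :: "bool list"
  assumes "u \<noteq> []"
  shows "\<exists>C::nat. \<forall>n::nat. comm_cc_word n (SInv 152 u) \<le> C"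
proof (intro exI allI)
  fix n
  show "comm_cc_word n (SInv 152 u) \<le> 2"
  proof (rule word_le)
    fix i
    show "comm_cc (words i) (words (n-i)) (\<lambda>x y. SInv 152 u (x@y)) \<le> 2"
    proof (cases "\<forall>b\<in>set u. b")
      case True
      define P :: "(bool list, bool list, bool) protocol" where
        "P = AliceNode (\<lambda>x. \<forall>b\<in>set x. b) (Leaf False)
               (BobNode (\<lambda>y. \<forall>b\<in>set y. b) (Leaf False) (Leaf True))"
      have "\<forall>x\<in>words i. \<forall>y\<in>words (n-i). run P x y = SInv 152 u (x@y)"
        unfolding P_def using SInv_allones[OF assms True] by auto
      from cc_le[OF this] show ?thesis unfolding P_def by simp
    next
      case False
      then obtain k where k: "k < length u" "\<not> u ! k" by (metis in_set_conv_nth)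
      have "\<forall>x\<in>words i. \<forall>y\<in>words (n-i). run (Leaf True) x y = SInv 152 u (x@y)"
        using SInv_true[OF k] by simp
      from cc_le[OF this] show ?thesis by simp
    qed
  qed
qed

end
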